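(* Let $G=(V,E)$ be a finite, connected, undirected graph with $n\ge2$ vertices and let $t=\phi(G)^2n^4$. (i) The expected absorption time of the Moran process on $G$ with $r=1$ (initial single mutant at a uniformly random vertex) is at most $t$. (ii) For any $\epsilon\in(0,1)$, this process reaches absorption within $t/\epsilon$ steps with probability at least $1-\epsilon$.
   Context: The Moran process on $G$ with mutant fitness $r>0$ is the Markov chain $(X_i)_{i\ge0}$ whose state $X_i\subseteq V$ is the set of vertices occupied by mutants; every other vertex is occupied by a non-mutant of fitness $1$. Write $W(S)=r|S|+|V\setminus S|$ for the total fitness. Given $X_i=S$, one step is: choose a vertex $x$ with probability $r/W(S)$ if $x\in S$ and $1/W(S)$ if $x\notin S$; then choose a neighbour $y$ of $x$ uniformly at random; set $X_{i+1}=S\cup\{y\}$ if $x\in S$ and $X_{i+1}=S\setminus\{y\}$ if $x\notin S$. Absorption means reaching $X_i=\emptyset$ or $X_i=V$. For $X\subseteq V$, $\phi(X)=\sum_{x\in X}\frac{1}{\deg x}$, and $\phi(G)=\phi(V)$. *)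

theory Defs
  imports "HOL-Probability.Probability"
begin

definition ugraph :: "'a set \<Rightarrow> ('a \<Rightarrow> 'a \<Rightarrow> bool) \<Rightarrow> bool" where
  "ugraph V E \<longleftrightarrow> finite V \<and> (\<forall>x y. E x y \<longrightarrow> x \<in> V \<and> y \<in> V)
     \<and> (\<forall>x y. E x y \<longrightarrow> E y x) \<and> (\<forall>x. \<not> E x x)"

definition connected_graph :: "'a set \<Rightarrow> ('a \<Rightarrow> 'a \<Rightarrow> bool) \<Rightarrow> bool" where
  "connected_graph V E \<longleftrightarrow> (\<forall>x\<in>V. \<forall>y\<in>V. (x, y) \<in> {(a, b). E a b}\<^sup>*)"

definition nbrs :: "'a set \<Rightarrow> ('a \<Rightarrow> 'a \<Rightarrow> bool) \<Rightarrow> 'a \<Rightarrow> 'a set" where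
  "nbrs V E x = {y \<in> V. E x y}"

definition deg :: "'a set \<Rightarrow> ('a \<Rightarrow> 'a \<Rightarrow> bool) \<Rightarrow> 'a \<Rightarrow> nat" where
  "deg V E x = card (nbrs V E x)"

definition phi :: "'a set \<Rightarrow> ('a \<Rightarrow> 'a \<Rightarrow> bool) \<Rightarrow> 'a set \<Rightarrow> real" where
  "phi V E X = (\<Sum>x\<in>X. 1 / real (deg V E x))"

definition total_fitness :: "'a set \<Rightarrow> real \<Rightarrow> 'a set \<Rightarrow> real" where
  "total_fitness V r S = r * real (card (S \<inter> V)) + real (card (V - S))"

definition moran_select :: "'a set \<Rightarrow> real \<Rightarrow> 'a set \<Rightarrow> 'a pmf" where
  "moran_select V r S = embed_pmf (\<lambda>x. if x \<in> V then (if x \<in> S then r else 1) / total_fitness V r S else 0)"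

definition moran_step :: "'a set \<Rightarrow> ('a \<Rightarrow> 'a \<Rightarrow> bool) \<Rightarrow> real \<Rightarrow> 'a set \<Rightarrow> 'a set pmf" where
  "moran_step V E r S =
     bind_pmf (moran_select V r S) (\<lambda>x.
     bind_pmf (pmf_of_set (nbrs V E x)) (\<lambda>y.
     return_pmf (if x \<in> S then S \<union> {y} else S - {y})))"

definition moran_init :: "'a set \<Rightarrow> 'a set pmf" where
  "moran_init V = map_pmf (\<lambda>v. {v}) (pmf_of_set V)"

definition moran_dist :: "'a set \<Rightarrow> ('a \<Rightarrow> 'a \<Rightarrow> bool) \<Rightarrow> real \<Rightarrow> nat \<Rightarrow> 'a set pmf" where
  "moran_dist V E r k = ((\<lambda>p. bind_pmf p (moran_step V E r)) ^^ k) (moran_init V)"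

text \<open>Since the states {} and V are absorbing, the absorption time T satisfies
  T \<le> k iff X_k \<in> {{}, V}.\<close>
definition prob_absorbed_by :: "'a set \<Rightarrow> ('a \<Rightarrow> 'a \<Rightarrow> bool) \<Rightarrow> real \<Rightarrow> nat \<Rightarrow> real" where
  "prob_absorbed_by V E r k = measure_pmf.prob (moran_dist V E r k) {S. S = {} \<or> S = V}"

text \<open>Expected absorption time E[T] = sum_{k\<ge>0} P(T > k) (in [0,\<infinity>]).\<close>
definition expected_absorption_time :: "'a set \<Rightarrow> ('a \<Rightarrow> 'a \<Rightarrow> bool) \<Rightarrow> real \<Rightarrow> ennreal" where
  "expected_absorption_time V E r = (\<Sum>k. ennreal (1 - prob_absorbed_by V E r k))"

end

theory Submission
  imports Defs
begin

lemma integral_bind_pmf_bdd: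
  fixes f :: "'b \<Rightarrow> real" assumes "\<And>x. \<bar>f x\<bar> \<le> B"
  shows "measure_pmf.expectation (bind_pmf M N) f = measure_pmf.expectation M (\<lambda>x. measure_pmf.expectation (N x) f)"
  using measurable_measure_pmf[of N] unfolding measure_pmf_bind
  apply (subst integral_bind[where K="count_space UNIV" and B=B and B'=1])
  using assms apply (auto intro: measure_pmf.finite_measure simp: measure_pmf.emeasure_space_1)
  done

lemma expectation_bdd:
  fixes f :: "'b \<Rightarrow> real" assumes "\<And>x. \<bar>f x\<bar> \<le> B"
  shows "\<bar>measure_pmf.expectation M f\<bar> \<le> B"
proof -
  have B0: "0 \<le> B" using assms[of undefined] by (meson abs_ge_zero order_trans)
  have "\<bar>measure_pmf.expectation M f\<bar> \<le> measure_pmf.expectation M (\<lambda>x. \<bar>f x\<bar>)"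
    by (rule integral_abs_bound)
  also have "\<dots> \<le> measure_pmf.expectation M (\<lambda>x. B)"
    using assms B0 by (intro integral_mono measure_pmf.integrable_const_bound[where B=B]) auto
  also have "\<dots> = B" by simp
  finally show ?thesis .
qed

lemma integral_return_pmf_real: "measure_pmf.expectation (return_pmf x) (f::'b\<Rightarrow>real) = f x"
  by (simp add: return_pmf.rep_eq integral_return)

definition nw :: "'a set \<Rightarrow> 'a \<Rightarrow> 'a \<Rightarrow> 'a set" where
  "nw S x y = (if x \<in> S then S \<union> {y} else S - {y})"

definition dd :: "'a set \<Rightarrow> ('a \<Rightarrow> 'a \<Rightarrow> bool) \<Rightarrow> 'a set \<Rightarrow> 'a \<Rightarrow> 'a \<Rightarrow> real" where
  "dd V E S x y = (if x \<in> S \<and> y \<notin> S then 1 / real (deg V E y)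
     else if x \<notin> S \<and> y \<in> S then - 1 / real (deg V E y) else 0)"

definition PP :: "'a set \<Rightarrow> ('a \<Rightarrow> 'a \<Rightarrow> bool) \<Rightarrow> ('a \<times> 'a) set" where
  "PP V E = Sigma V (nbrs V E)"

definition hh :: "'a set \<Rightarrow> ('a \<Rightarrow> 'a \<Rightarrow> bool) \<Rightarrow> 'a set \<Rightarrow> real" where
  "hh V E S = phi V E S * (phi V E V - phi V E S)"

lemma cross_edge:
  assumes "(a, b) \<in> R\<^sup>*" "a \<in> S" "b \<notin> S"
  shows "\<exists>x y. (x, y) \<in> R \<and> x \<in> S \<and> y \<notin> S"
  using assms by (induction rule: rtrancl_induct) auto

context
  fixes V :: "'a set" and E :: "'a \<Rightarrow> 'a \<Rightarrow> bool"
  assumes ug: "ugraph V E" and conn: "connected_graph V E" and n2: "2 \<le> card V"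
begin

lemma finV: "finite V" using ug unfolding ugraph_def by auto
lemma Vne: "V \<noteq> {}" using n2 by auto
lemma npos: "0 < card V" using n2 by auto
lemma edgeV: "E x y \<Longrightarrow> x \<in> V \<and> y \<in> V" using ug unfolding ugraph_def by auto
lemma edge_sym: "E x y \<Longrightarrow> E y x" using ug unfolding ugraph_def by auto

lemma nbrs_sub: "nbrs V E x \<subseteq> V" by (auto simp: nbrs_def)
lemma nbrs_fin: "finite (nbrs V E x)" using finV nbrs_sub finite_subset by blast

lemma nbrs_ne: assumes "x \<in> V" shows "nbrs V E x \<noteq> {}"
proof -
  have "card (V - {x}) \<ge> 1" using n2 assms finV by auto
  then obtain y where y: "y \<in> V" "y \<noteq> x"
    by (metis Diff_eq_empty_iff card_0_eq finite_Diff finV insert_Diff insert_subset not_one_le_zero subsetI) 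
  have "(x, y) \<in> {(a, b). E a b}\<^sup>*" using conn assms y unfolding connected_graph_def by auto
  then show ?thesis
  proof (cases rule: converse_rtranclE)
    case base then show ?thesis using y by simp
  next
    case (step z) then show ?thesis using edgeV by (auto simp: nbrs_def)
  qed
qed

lemma deg_pos: "x \<in> V \<Longrightarrow> 0 < deg V E x"
  using nbrs_ne nbrs_fin by (simp add: deg_def card_gt_0_iff)

lemma deg_le: "deg V E x \<le> card V"
  unfolding deg_def using nbrs_sub finV by (rule card_mono[rotated])

lemma deg_out: assumes "x \<notin> V" shows "deg V E x = 0"
proof -
  have "{y \<in> V. E x y} = {}" using assms edgeV by auto
  then show ?thesis unfolding deg_def nbrs_def by (metis card.empty)
qed

lemma phi_nonneg: "0 \<le> phi V E S"
  unfolding phi_def by (cases "finite S") (auto intro: sum_nonneg)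

lemma phi_le: "phi V E S \<le> phi V E V"
proof (cases "finite S")
  case True
  have "phi V E S = phi V E (S \<inter> V) + phi V E (S - V)"
    unfolding phi_def using True by (rule sum.Int_Diff)
  moreover have "phi V E (S - V) = 0" unfolding phi_def by (simp add: deg_out)
  moreover have "phi V E (S \<inter> V) \<le> phi V E V" unfolding phi_def
    using finV by (intro sum_mono2) auto
  ultimately show ?thesis by simp
next
  case False
  then show ?thesis using phi_nonneg[of V] by (simp add: phi_def)
qed

lemma hh_nonneg: "0 \<le> hh V E S"
  unfolding hh_def using phi_nonneg[of S] phi_le[of S] by simp

lemma hh_le: "hh V E S \<le> (phi V E V)^2"
  unfolding hh_def power2_eq_square
  using phi_nonneg[of S] phi_le[of S] phi_nonneg[of V]
  by (intro mult_mono) auto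

lemma hh_abs: "\<bar>hh V E S\<bar> \<le> (phi V E V)^2"
  using hh_nonneg hh_le by simp

lemma sel: "moran_select V 1 S = pmf_of_set V"
proof -
  have tf: "total_fitness V 1 S = real (card V)"
  proof -
    have "card (S \<inter> V) + card (V - S) = card V"
      using finV by (metis Int_commute card_Int_Diff) 
    then show ?thesis unfolding total_fitness_def by (simp flip: of_nat_add)
  qed
  have "(\<lambda>x. if x \<in> V then (if x \<in> S then 1 else 1) / total_fitness V 1 S else 0) = pmf (pmf_of_set V)"
    using finV Vne by (auto simp: tf fun_eq_iff)
  then show ?thesis unfolding moran_select_def
    by (simp add: type_definition.Rep_inverse[OF td_pmf_embed_pmf])
qed

lemma step_eq: "moran_step V E 1 S = bind_pmf (pmf_of_set V) (\<lambda>x.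
     bind_pmf (pmf_of_set (nbrs V E x)) (\<lambda>y. return_pmf (nw S x y)))"
  unfolding moran_step_def sel nw_def ..

lemma exp_step:
  fixes g :: "'a set \<Rightarrow> real"
  assumes gb: "\<And>T. \<bar>g T\<bar> \<le> B"
  shows "measure_pmf.expectation (moran_step V E 1 S) g =
    (\<Sum>(x,y)\<in>PP V E. g (nw S x y) / (real (card V) * real (deg V E x)))"
proof -
  have "measure_pmf.expectation (moran_step V E 1 S) g =
     measure_pmf.expectation (pmf_of_set V) (\<lambda>x. measure_pmf.expectation
       (bind_pmf (pmf_of_set (nbrs V E x)) (\<lambda>y. return_pmf (nw S x y))) g)"
    unfolding step_eq using gb by (rule integral_bind_pmf_bdd)
  also have "\<dots> = measure_pmf.expectation (pmf_of_set V) (\<lambda>x.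
      measure_pmf.expectation (pmf_of_set (nbrs V E x)) (\<lambda>y. g (nw S x y)))"
    apply (rule Bochner_Integration.integral_cong[OF refl])
    apply (subst integral_bind_pmf_bdd[where B=B])
    using gb apply (auto simp: integral_return_pmf_real)
    done
  also have "\<dots> = (\<Sum>x\<in>V. (\<Sum>y\<in>nbrs V E x. g (nw S x y)) / real (card (nbrs V E x))) / real (card V)"
    using finV Vne nbrs_fin nbrs_ne by (simp add: integral_pmf_of_set)
  also have "\<dots> = (\<Sum>x\<in>V. (\<Sum>y\<in>nbrs V E x. g (nw S x y) / (real (card V) * real (deg V E x))))"
    by (simp add: sum_divide_distrib deg_def mult.commute)
  also have "\<dots> = (\<Sum>(x,y)\<in>PP V E. g (nw S x y) / (real (card V) * real (deg V E x)))"
    unfolding PP_def using finV nbrs_fin by (subst sum.Sigma) auto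
  finally show ?thesis .
qed

lemma PP_mem: "(x, y) \<in> PP V E \<longleftrightarrow> x \<in> V \<and> y \<in> V \<and> E x y"
  using edgeV by (auto simp: PP_def nbrs_def)

lemma PP_fin: "finite (PP V E)"
  unfolding PP_def using finV nbrs_fin by auto

lemma w_sum: "(\<Sum>(x,y)\<in>PP V E. 1 / (real (card V) * real (deg V E x))) = 1"
proof -
  have "(\<Sum>(x,y)\<in>PP V E. 1 / (real (card V) * real (deg V E x)))
      = (\<Sum>x\<in>V. \<Sum>y\<in>nbrs V E x. 1 / (real (card V) * real (deg V E x)))"
    unfolding PP_def using finV nbrs_fin by (subst sum.Sigma) auto
  also have "\<dots> = (\<Sum>x\<in>V. 1 / real (card V))"
    using deg_pos by (intro sum.cong) (auto simp: deg_def)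
  also have "\<dots> = 1" using npos by simp
  finally show ?thesis .
qed

lemma phi_nw:
  assumes "S \<subseteq> V" "y \<in> V"
  shows "phi V E (nw S x y) = phi V E S + dd V E S x y"
proof -
  have fS: "finite S" using assms finV finite_subset by blast
  show ?thesis
  proof (cases "x \<in> S")
    case True
    then show ?thesis using fS
      by (cases "y \<in> S") (auto simp: nw_def dd_def phi_def insert_absorb)
  next
    case False
    then show ?thesis using fS
      by (cases "y \<in> S") (auto simp: nw_def dd_def phi_def sum_diff1)
  qed
qed

lemma dd_antisym:
  assumes "S \<subseteq> V"
  shows "(\<Sum>(x,y)\<in>PP V E. dd V E S x y / (real (card V) * real (deg V E x))) = 0"
proof -
  define F where "F = (\<lambda>(x,y). dd V E S x y / (real (card V) * real (deg V E x)))"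
  have neg: "F (prod.swap p) = - F p" if "p \<in> PP V E" for p
  proof -
    obtain x y where p: "p = (x, y)" by (cases p)
    have "x \<in> V" "y \<in> V" using that p PP_mem by auto
    then have "deg V E x > 0" "deg V E y > 0" using deg_pos by auto
    then show ?thesis unfolding F_def p by (auto simp: dd_def field_simps)
  qed
  have "(\<Sum>p\<in>PP V E. F p) = (\<Sum>p\<in>PP V E. F (prod.swap p))"
    by (rule sum.reindex_bij_witness[where i=prod.swap and j=prod.swap]) (auto simp: PP_mem edge_sym)
  also have "\<dots> = - (\<Sum>p\<in>PP V E. F p)"
    using neg by (simp add: sum_negf)
  finally have "(\<Sum>p\<in>PP V E. F p) = 0" by simp
  then show ?thesis unfolding F_def .
qed

lemma drift:
  assumes SV: "S \<subseteq> V"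
  shows "measure_pmf.expectation (moran_step V E 1 S) (hh V E) \<le>
     hh V E S - (if S = {} \<or> S = V then 0 else 1 / real (card V) ^ 4)"
proof -
  define n where "n = real (card V)"
  define \<Phi> where "\<Phi> = phi V E V"
  define a where "a = hh V E S"
  define c where "c = \<Phi> - 2 * phi V E S"
  define Q where "Q = (\<Sum>(x,y)\<in>PP V E. (dd V E S x y)^2 / (n * real (deg V E x)))"
  have pt: "hh V E (nw S x y) / (n * real (deg V E x)) =
     a * (1 / (n * real (deg V E x))) + c * (dd V E S x y / (n * real (deg V E x)))
       - (dd V E S x y)^2 / (n * real (deg V E x))" if "(x,y) \<in> PP V E" for x y
  proof -
    have "y \<in> V" using that PP_mem by auto
    then have "phi V E (nw S x y) = phi V E S + dd V E S x y" using phi_nw SV by auto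
    then have "hh V E (nw S x y) = a + c * dd V E S x y - (dd V E S x y)^2"
      unfolding hh_def a_def c_def \<Phi>_def by (simp add: algebra_simps power2_eq_square)
    then show ?thesis by (simp add: diff_divide_distrib add_divide_distrib)
  qed
  have "measure_pmf.expectation (moran_step V E 1 S) (hh V E) =
     (\<Sum>(x,y)\<in>PP V E. hh V E (nw S x y) / (n * real (deg V E x)))"
    unfolding n_def using hh_abs by (rule exp_step)
  also have "\<dots> = (\<Sum>(x,y)\<in>PP V E. a * (1 / (n * real (deg V E x))) + c * (dd V E S x y / (n * real (deg V E x)))
       - (dd V E S x y)^2 / (n * real (deg V E x)))"
    using pt by (intro sum.cong) auto
  also have "\<dots> = a * (\<Sum>(x,y)\<in>PP V E. 1 / (n * real (deg V E x)))
      + c * (\<Sum>(x,y)\<in>PP V E. dd V E S x y / (n * real (deg V E x))) - Q"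
    unfolding Q_def by (simp add: sum_subtractf sum.distrib sum_distrib_left case_prod_beta)
  also have "\<dots> = a - Q"
    using w_sum dd_antisym[OF SV] unfolding n_def by simp
  finally have eq: "measure_pmf.expectation (moran_step V E 1 S) (hh V E) = a - Q" .
  have Qnn: "0 \<le> Q" unfolding Q_def n_def by (intro sum_nonneg) auto
  show ?thesis
  proof (cases "S = {} \<or> S = V")
    case True then show ?thesis using eq Qnn a_def by simp
  next
    case False
    then obtain s b where sb: "s \<in> S" "b \<in> V" "b \<notin> S" using SV by blast
    then have "(s, b) \<in> {(a, b). E a b}\<^sup>*" using conn SV unfolding connected_graph_def by auto
    from cross_edge[OF this sb(1,3)] obtain x y where xy: "E x y" "x \<in> S" "y \<notin> S" by auto
    then have xyP: "(x, y) \<in> PP V E" using PP_mem edgeV by auto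
    have dx: "0 < deg V E x" "deg V E x \<le> card V" using deg_pos deg_le edgeV xy by auto
    have dy: "0 < deg V E y" "deg V E y \<le> card V" using deg_pos deg_le edgeV xy by auto
    have "1 / n ^ 4 \<le> (dd V E S x y)^2 / (n * real (deg V E x))"
    proof -
      have "(dd V E S x y)^2 / (n * real (deg V E x)) = 1 / (real (deg V E y)^2 * (n * real (deg V E x)))"
        using xy by (simp add: dd_def power_divide)
      moreover have "real (deg V E y)^2 * (n * real (deg V E x)) \<le> n ^ 4"
      proof -
        have "real (deg V E y)^2 \<le> n^2" using dy unfolding n_def by (intro power_mono) auto
        moreover have "n * real (deg V E x) \<le> n * n" using dx npos unfolding n_def by auto
        ultimately have "real (deg V E y)^2 * (n * real (deg V E x)) \<le> n^2 * (n * n)"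
          using npos unfolding n_def by (intro mult_mono) auto
        then show ?thesis by (simp add: power_def eval_nat_numeral algebra_simps)
      qed
      moreover have "0 < real (deg V E y)^2 * (n * real (deg V E x))"
        using dx dy npos unfolding n_def by auto
      ultimately show ?thesis by (simp add: frac_le)
    qed
    also have "\<dots> \<le> Q" unfolding Q_def
      using member_le_sum[OF xyP, of "\<lambda>(x,y). (dd V E S x y)^2 / (n * real (deg V E x))"] PP_fin
      unfolding n_def by auto
    finally show ?thesis using eq False a_def n_def by simp
  qed
qed

definition NA :: "'a set set" where "NA = {S. \<not> (S = {} \<or> S = V)}"

lemma absorb_nw: "S = {} \<or> S = V \<Longrightarrow> (x, y) \<in> PP V E \<Longrightarrow> nw S x y = S"
  using PP_mem by (auto simp: nw_def)

lemma q_step: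
  assumes "S \<subseteq> V"
  shows "measure_pmf.expectation (moran_step V E 1 S) (indicator NA) \<le> (indicator NA S :: real)"
proof -
  have e: "measure_pmf.expectation (moran_step V E 1 S) (indicator NA) =
    (\<Sum>(x,y)\<in>PP V E. indicator NA (nw S x y) / (real (card V) * real (deg V E x)))"
    by (rule exp_step[where B=1]) (simp split: split_indicator)
  show ?thesis
  proof (cases "S \<in> NA")
    case True
    have "(\<Sum>(x,y)\<in>PP V E. indicator NA (nw S x y) / (real (card V) * real (deg V E x)))
       \<le> (\<Sum>(x,y)\<in>PP V E. 1 / (real (card V) * real (deg V E x)))"
      by (intro sum_mono) (auto simp: divide_right_mono split: split_indicator)
    moreover have "indicator NA S = (1::real)" using True by simp
    ultimately show ?thesis using e w_sum by linarith
  next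
    case False
    then have "S = {} \<or> S = V" by (simp add: NA_def)
    then have "(\<Sum>(x,y)\<in>PP V E. indicator NA (nw S x y) / (real (card V) * real (deg V E x))) = 0"
      using absorb_nw False by (intro sum.neutral) (auto split: split_indicator)
    moreover have "indicator NA S = (0::real)" using False by simp
    ultimately show ?thesis using e by linarith
  qed
qed

lemma dist_Suc: "moran_dist V E 1 (Suc k) = bind_pmf (moran_dist V E 1 k) (moran_step V E 1)"
  by (simp add: moran_dist_def)

lemma set_step:
  assumes SV: "S \<subseteq> V" shows "set_pmf (moran_step V E 1 S) \<subseteq> Pow V"
proof
  fix T assume "T \<in> set_pmf (moran_step V E 1 S)"
  then obtain x y where xy: "x \<in> V" "y \<in> nbrs V E x" "T = nw S x y"
    unfolding step_eq using finV Vne nbrs_fin nbrs_ne by auto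
  then have "y \<in> V" using nbrs_sub by auto
  then show "T \<in> Pow V" using xy SV by (auto simp: nw_def)
qed

lemma supp: "set_pmf (moran_dist V E 1 k) \<subseteq> Pow V"
proof (induction k)
  case 0
  then show ?case using finV Vne by (auto simp: moran_dist_def moran_init_def)
next
  case (Suc k)
  have "\<And>S. S \<in> set_pmf (moran_dist V E 1 k) \<Longrightarrow> set_pmf (moran_step V E 1 S) \<subseteq> Pow V"
    using Suc.IH set_step by blast
  then show ?case unfolding dist_Suc set_bind_pmf by blast
qed

lemma supp_fin: "finite (set_pmf (moran_dist V E 1 k))"
  by (rule finite_subset[OF supp]) (simp add: finV)

lemma step_mono:
  fixes f g :: "'a set \<Rightarrow> real"
  assumes fb: "\<And>T. \<bar>f T\<bar> \<le> B" and fg: "\<And>S. S \<subseteq> V \<Longrightarrow> measure_pmf.expectation (moran_step V E 1 S) f \<le> g S"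
  shows "measure_pmf.expectation (moran_dist V E 1 (Suc k)) f \<le> measure_pmf.expectation (moran_dist V E 1 k) g"
proof -
  have "measure_pmf.expectation (moran_dist V E 1 (Suc k)) f =
     measure_pmf.expectation (moran_dist V E 1 k) (\<lambda>S. measure_pmf.expectation (moran_step V E 1 S) f)"
    unfolding dist_Suc using fb by (rule integral_bind_pmf_bdd)
  also have "\<dots> \<le> measure_pmf.expectation (moran_dist V E 1 k) g"
  proof (intro integral_mono_AE integrable_measure_pmf_finite AE_pmfI supp_fin)
    fix y assume "y \<in> set_pmf (moran_dist V E 1 k)"
    then have "y \<subseteq> V" using supp by blast
    then show "measure_pmf.expectation (moran_step V E 1 y) f \<le> g y" by (rule fg)
  qed
  finally show ?thesis .
qed

definition qq :: "nat \<Rightarrow> real" where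
  "qq k = measure_pmf.expectation (moran_dist V E 1 k) (indicator NA)"

lemma qq_eq: "qq k = 1 - prob_absorbed_by V E 1 k"
proof -
  have "qq k = measure_pmf.prob (moran_dist V E 1 k) NA"
    unfolding qq_def by simp
  also have "NA = UNIV - {S. S = {} \<or> S = V}" by (auto simp: NA_def)
  also have "measure_pmf.prob (moran_dist V E 1 k) (UNIV - {S. S = {} \<or> S = V}) =
      1 - prob_absorbed_by V E 1 k"
    unfolding prob_absorbed_by_def using measure_pmf.prob_compl[of "{S. S = {} \<or> S = V}" "moran_dist V E 1 k"]
    by simp
  finally show ?thesis .
qed

lemma qq_nonneg: "0 \<le> qq k"
  unfolding qq_def by simp

lemma qq_mono: "qq (Suc k) \<le> qq k"
  unfolding qq_def using q_step by (intro step_mono[where B=1]) (auto split: split_indicator)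

definition AA :: "nat \<Rightarrow> real" where
  "AA k = measure_pmf.expectation (moran_dist V E 1 k) (hh V E)"

lemma AA_step: "AA (Suc k) \<le> AA k - qq k / real (card V) ^ 4"
proof -
  define c where "c = 1 / real (card V) ^ 4"
  have "AA (Suc k) \<le> measure_pmf.expectation (moran_dist V E 1 k) (\<lambda>S. hh V E S - c * indicator NA S)"
    unfolding AA_def
  proof (rule step_mono[where B="(phi V E V)^2"])
    show "\<bar>hh V E T\<bar> \<le> (phi V E V)\<^sup>2" for T by (rule hh_abs)
    show "measure_pmf.expectation (moran_step V E 1 S) (hh V E) \<le> hh V E S - c * indicator NA S"
      if "S \<subseteq> V" for S
      using drift[OF that] unfolding c_def NA_def
      by (cases "S = {} \<or> S = V") (auto simp: indicator_def)
  qed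
  also have "\<dots> = AA k - c * qq k"
    unfolding AA_def qq_def
    by (simp add: Bochner_Integration.integral_diff[OF integrable_measure_pmf_finite[OF supp_fin]
       integrable_measure_pmf_finite[OF supp_fin]])
  finally show ?thesis unfolding c_def by simp
qed

lemma partial_sum: "(\<Sum>k<K. qq k) \<le> (phi V E V)^2 * real (card V) ^ 4"
proof -
  define c where "c = real (card V) ^ 4"
  have cpos: "0 < c" using npos unfolding c_def by simp
  have tel: "(\<Sum>k<K. qq k) / c \<le> AA 0 - AA K" for K
  proof (induction K)
    case 0 then show ?case by simp
  next
    case (Suc K)
    then show ?case using AA_step[of K] unfolding c_def by (simp add: add_divide_distrib)
  qed
  have "AA 0 \<le> (phi V E V)^2" unfolding AA_def
    using expectation_bdd[of "hh V E", OF hh_abs] by (metis abs_le_D1)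
  moreover have "0 \<le> AA K" unfolding AA_def by (rule Bochner_Integration.integral_nonneg) (simp add: hh_nonneg)
  ultimately have "(\<Sum>k<K. qq k) / c \<le> (phi V E V)^2" using tel[of K] by simp
  then show ?thesis using cpos unfolding c_def by (simp add: divide_le_eq)
qed

lemma main_exp: "expected_absorption_time V E 1 \<le> ennreal ((phi V E V)^2 * real (card V) ^ 4)"
proof -
  have "expected_absorption_time V E 1 = (SUP K. \<Sum>k<K. ennreal (1 - prob_absorbed_by V E 1 k))"
    unfolding expected_absorption_time_def by (rule suminf_eq_SUP)
  also have "\<dots> \<le> ennreal ((phi V E V)^2 * real (card V) ^ 4)"
  proof (rule SUP_least)
    fix K
    have "(\<Sum>k<K. ennreal (1 - prob_absorbed_by V E 1 k)) = ennreal (\<Sum>k<K. qq k)"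
      using qq_nonneg by (simp add: qq_eq)
    also have "\<dots> \<le> ennreal ((phi V E V)^2 * real (card V) ^ 4)"
      by (intro ennreal_leI partial_sum)
    finally show "(\<Sum>k<K. ennreal (1 - prob_absorbed_by V E 1 k)) \<le> ennreal ((phi V E V)^2 * real (card V) ^ 4)" .
  qed
  finally show ?thesis .
qed

lemma main_prob:
  assumes "0 < \<epsilon>" "\<epsilon> < 1"
  shows "1 - \<epsilon> \<le> prob_absorbed_by V E 1 (nat \<lfloor>(phi V E V)^2 * real (card V) ^ 4 / \<epsilon>\<rfloor>)"
proof -
  define t where "t = (phi V E V)^2 * real (card V) ^ 4"
  define K where "K = nat \<lfloor>t / \<epsilon>\<rfloor>"
  have t0: "0 \<le> t" unfolding t_def by simp
  have dec: "decseq qq" using qq_mono by (rule decseq_SucI)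
  have "(\<Sum>k<Suc K. qq K) \<le> (\<Sum>k<Suc K. qq k)"
    using dec by (intro sum_mono) (auto simp: decseq_def)
  also have "\<dots> \<le> t" unfolding t_def by (rule partial_sum)
  finally have s: "real (Suc K) * qq K \<le> t" by simp
  have "t / \<epsilon> < real K + 1"
  proof -
    have "0 \<le> t / \<epsilon>" using t0 assms by simp
    then have "real K = of_int \<lfloor>t / \<epsilon>\<rfloor>" unfolding K_def by simp
    then show ?thesis by linarith
  qed
  then have tK: "t < (real K + 1) * \<epsilon>" using assms by (simp add: divide_less_eq)
  have "qq K \<le> \<epsilon>"
  proof (rule ccontr)
    assume "\<not> qq K \<le> \<epsilon>"
    then have "(real K + 1) * \<epsilon> < (real K + 1) * qq K" by (intro mult_strict_left_mono) auto
    then show False using s tK by (simp add: algebra_simps)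
  qed
  then show ?thesis using qq_eq[of K] unfolding K_def t_def by simp
qed

end

theorem corollary10:
  fixes V :: "'a set" and E :: "'a \<Rightarrow> 'a \<Rightarrow> bool"
  assumes "ugraph V E" and "connected_graph V E" and "card V \<ge> 2"
  defines "t \<equiv> (phi V E V)^2 * real (card V)^4"
  shows "expected_absorption_time V E 1 \<le> ennreal t \<and>
         (\<forall>\<epsilon>::real. 0 < \<epsilon> \<and> \<epsilon> < 1 \<longrightarrow>
           prob_absorbed_by V E 1 (nat \<lfloor>t / \<epsilon>\<rfloor>) \<ge> 1 - \<epsilon>)"
  using main_exp[OF assms(1-3)] main_prob[OF assms(1-3)] unfolding t_def by auto

end
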